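(* Let $\alpha>0$. Let $u_0:\mathbb{R}\to[0,1]$ be uniformly continuous with $u_0>0$ on $\mathbb{R}$, $\liminf_{x\to-\infty}u_0>0$, $\lim_{x\to+\infty}u_0=0$, of class $C^2$ and nonincreasing on $[\xi_0,+\infty)$ for some $\xi_0>0$, and such that $\varphi_0:=-\ln u_0$ satisfies $\varphi_0'=o(\varphi_0^{-\alpha})$ and $\varphi_0''=o(\varphi_0')$ as $x\to+\infty$. Let $\rho>0$ and define $$w(t,x):=\exp\Big\{1-\big[(1+\varphi_0(x))^{\alpha+1}-\rho(\alpha+1)t\big]^{\frac{1}{\alpha+1}}\Big\},\qquad x_0(t):=\sup\Big\{x\in\mathbb{R}: u_0(x)=\exp\big(1-(\rho(\alpha+1)t+1)^{\frac{1}{\alpha+1}}\big)\Big\}.$$ Then for any small $\varepsilon>0$ there exists $t^\#>0$, depending on $\varepsilon$, such that $$|w_{xx}(t,x)|<\varepsilon\frac{w(t,x)}{(1-\ln w(t,x))^\alpha}\quad\text{for all } x\ge x_0(t)\text{ and } t\ge t^\#.$$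
   Context: $w$ solves $w_t=\rho\, w/(1-\ln w)^\alpha$ with $w(0,\cdot)=u_0$; one has $w(t,x_0(t))=1$ and $0<w(t,x)\le1$ for $x\ge x_0(t)$. *)

theory Defs
  imports "HOL-Analysis.Analysis" "HOL-Library.Landau_Symbols"
begin

definition wfun :: "real \<Rightarrow> real \<Rightarrow> (real \<Rightarrow> real) \<Rightarrow> real \<Rightarrow> real \<Rightarrow> real" where
  "wfun \<alpha> \<rho> u0 t x =
     exp (1 - ((1 + (- ln (u0 x))) powr (\<alpha> + 1) - \<rho> * (\<alpha> + 1) * t) powr (1 / (\<alpha> + 1)))"

definition x0fun :: "real \<Rightarrow> real \<Rightarrow> (real \<Rightarrow> real) \<Rightarrow> real \<Rightarrow> real" where
  "x0fun \<alpha> \<rho> u0 t =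
     Sup {x. u0 x = exp (1 - (\<rho> * (\<alpha> + 1) * t + 1) powr (1 / (\<alpha> + 1)))}"

end

theory Submission
  imports Defs
begin

lemma alg_id:
  fixes a \<alpha> G P q w A pa d1 d2 :: real
  assumes "a = \<alpha> + 1" "\<alpha> > 0" "G > 0" "P > 0" "A = pa * d1"
  shows "-((-w*(q*A))*(q*A) + w*((1/a-1)*(q/G)*(a*A)*A + q*(\<alpha>*(pa/P)*d1*d1 + pa*d2)))
       = w*q*(q*A^2 + \<alpha>*A^2/G - \<alpha>*(A*d1/P) - pa*d2)"
proof -
  have e: "(1/a-1)*a = -\<alpha>" using assms by (simp add: field_simps)
  have "(1/a-1)*(q/G)*(a*A)*A = ((1/a-1)*a)*(q/G)*A*A" by simp
  also have "\<dots> = -\<alpha>*q*A^2/G" using e by (simp add: power2_eq_square)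
  finally have 1: "(1/a-1)*(q/G)*(a*A)*A = -\<alpha>*q*A^2/G" .
  have 2: "\<alpha>*(pa/P)*d1*d1 = \<alpha>*(A*d1/P)" using assms by simp
  show ?thesis unfolding 1 2 by (simp add: algebra_simps power2_eq_square)
qed
lemma second_deriv:
  fixes \<phi> d1 d2 :: "real \<Rightarrow> real" and \<alpha> c x :: real and U :: "real set"
  assumes U: "open U" "x \<in> U" and al: "\<alpha> > 0"
    and D1: "\<And>y. y \<in> U \<Longrightarrow> (\<phi> has_real_derivative d1 y) (at y)"
    and D2: "\<And>y. y \<in> U \<Longrightarrow> (d1 has_real_derivative d2 y) (at y)"
    and Ppos: "\<And>y. y \<in> U \<Longrightarrow> 1 + \<phi> y > 0"
    and Gpos: "\<And>y. y \<in> U \<Longrightarrow> (1 + \<phi> y) powr (\<alpha> + 1) - c > 0"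
  defines "P \<equiv> 1 + \<phi> x"
  defines "G \<equiv> P powr (\<alpha> + 1) - c"
  defines "q \<equiv> G powr (1 / (\<alpha> + 1) - 1)"
  defines "A \<equiv> P powr \<alpha> * d1 x"
  defines "w \<equiv> exp (1 - G powr (1 / (\<alpha> + 1)))"
  shows "deriv (deriv (\<lambda>y. exp (1 - ((1 + \<phi> y) powr (\<alpha> + 1) - c) powr (1 / (\<alpha> + 1))))) x
     = w * q * (q * A\<^sup>2 + \<alpha> * A\<^sup>2 / G - \<alpha> * (A * d1 x / P) - P powr \<alpha> * d2 x)"
proof -
  define a where "a = \<alpha> + 1"
  have a0: "a > 0" "a \<noteq> 0" using al by (auto simp: a_def)
  define Pf where "Pf = (\<lambda>y. 1 + \<phi> y)"
  define Gf where "Gf = (\<lambda>y. Pf y powr a - c)"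
  define qf where "qf = (\<lambda>y. Gf y powr (1 / a - 1))"
  define Af where "Af = (\<lambda>y. Pf y powr \<alpha> * d1 y)"
  define wf where "wf = (\<lambda>y. exp (1 - Gf y powr (1 / a)))"
  define W1 where "W1 = (\<lambda>y. - wf y * (qf y * Af y))"
  have dP: "(Pf has_real_derivative d1 y) (at y)" if "y \<in> U" for y
    unfolding Pf_def using D1[OF that] by (auto intro!: derivative_eq_intros)
  have dG: "(Gf has_real_derivative a * Af y) (at y)" if "y \<in> U" for y
  proof -
    have "((\<lambda>y. Pf y powr a) has_real_derivative a * Pf y powr (a - of_nat 1) * d1 y) (at y)"
      by (rule DERIV_fun_powr[OF dP[OF that]]) (use Ppos[OF that] in \<open>simp add: Pf_def\<close>)
    from DERIV_diff[OF this DERIV_const[of c]]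
    have "(Gf has_real_derivative a * Pf y powr (a - of_nat 1) * d1 y) (at y)"
      unfolding Gf_def by simp
    then show ?thesis by (simp add: Af_def a_def mult.assoc)
  qed
  have Gp: "Gf y > 0" if "y \<in> U" for y using Gpos[OF that] by (simp add: Gf_def Pf_def a_def)
  have dh: "((\<lambda>y. Gf y powr (1/a)) has_real_derivative qf y * Af y) (at y)" if "y \<in> U" for y
  proof -
    have "((\<lambda>y. Gf y powr (1/a)) has_real_derivative (1/a) * Gf y powr (1/a - of_nat 1) * (a * Af y)) (at y)"
      by (rule DERIV_fun_powr[OF dG[OF that] Gp[OF that]])
    then show ?thesis using a0 by (simp add: qf_def)
  qed
  have dw: "(wf has_real_derivative W1 y) (at y)" if "y \<in> U" for y
    unfolding wf_def W1_def
    by (rule derivative_eq_intros dh[OF that] refl | simp)+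
  have dq: "(qf has_real_derivative (1/a - 1) * Gf x powr (1/a - 1 - of_nat 1) * (a * Af x)) (at x)"
    unfolding qf_def by (rule DERIV_fun_powr[OF dG[OF U(2)] Gp[OF U(2)]])
  have dPa: "((\<lambda>y. Pf y powr \<alpha>) has_real_derivative \<alpha> * Pf x powr (\<alpha> - of_nat 1) * d1 x) (at x)"
    by (rule DERIV_fun_powr[OF dP[OF U(2)]]) (use Ppos[OF U(2)] in \<open>simp add: Pf_def\<close>)
  have dA: "(Af has_real_derivative (\<alpha> * Pf x powr (\<alpha> - of_nat 1) * d1 x * d1 x + Pf x powr \<alpha> * d2 x)) (at x)"
    unfolding Af_def using DERIV_mult[OF dPa D2[OF U(2)]] by (simp add: algebra_simps)
  define W2 where "W2 = - (W1 x * (qf x * Af x) + wf x * ((1/a - 1) * Gf x powr (1/a - 1 - of_nat 1) * (a * Af x) * Af x + qf x * (\<alpha> * Pf x powr (\<alpha> - of_nat 1) * d1 x * d1 x + Pf x powr \<alpha> * d2 x)))"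
  have dW1: "(W1 has_real_derivative W2) (at x)"
    unfolding W1_def W2_def
    using DERIV_minus[OF DERIV_mult[OF dw[OF U(2)] DERIV_mult[OF dq dA]]] by (simp add: W1_def algebra_simps)
  have eqf: "(\<lambda>y. exp (1 - ((1 + \<phi> y) powr (\<alpha> + 1) - c) powr (1 / (\<alpha> + 1)))) = wf"
    by (simp add: wf_def Gf_def Pf_def a_def)
  have "(deriv wf has_real_derivative W2) (at x)"
    by (rule has_field_derivative_transform_within_open[OF dW1 U(1) U(2)])
       (use dw in \<open>auto intro: DERIV_imp_deriv[symmetric]\<close>)
  then have "deriv (deriv wf) x = W2" by (rule DERIV_imp_deriv)
  moreover have "W2 = w * q * (q * A\<^sup>2 + \<alpha> * A\<^sup>2 / G - \<alpha> * (A * d1 x / P) - P powr \<alpha> * d2 x)"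
  proof -
    have Gx: "Gf x > 0" using Gp[OF U(2)] .
    have Px: "Pf x > 0" using Ppos[OF U(2)] by (simp add: Pf_def)
    have e1: "Gf x powr (1/a - 1 - of_nat 1) = qf x / Gf x"
      unfolding qf_def using Gx by (simp add: powr_diff power2_eq_square)
    have e2: "Pf x powr (\<alpha> - of_nat 1) = Pf x powr \<alpha> / Pf x"
      using Px by (simp add: powr_diff)
    have ids: "Pf x = P" "Gf x = G" "qf x = q" "Af x = A" "wf x = w"
      by (simp_all add: Pf_def P_def Gf_def G_def a_def qf_def q_def Af_def A_def wf_def w_def)
    show ?thesis unfolding W2_def W1_def e1 e2 ids e1[unfolded ids] e2[unfolded ids]
      by (rule alg_id) (use Gx Px al ids in \<open>simp_all add: a_def A_def\<close>)
  qed
  ultimately show ?thesis unfolding eqf by simp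
qed
lemma bound_E:
  fixes q G P A d1 d2 pa \<delta> p \<alpha> \<epsilon> :: real
  assumes q: "0 < q" "q \<le> 1" and G: "G \<ge> 1" and P: "P \<ge> 1" and al: "\<alpha> > 0"
    and hA: "\<bar>A\<bar> \<le> p * \<delta>" and h1: "\<bar>d1\<bar> \<le> \<delta>" and h2: "\<bar>d2\<bar> \<le> \<delta> * \<bar>d1\<bar>"
    and Aeq: "A = pa * d1" and pa: "pa > 0" and d: "0 < \<delta>" "\<delta> \<le> 1" and p: "p > 0"
    and eps: "\<delta> * ((1 + \<alpha>) * p\<^sup>2 + \<alpha> * p + p) < \<epsilon>"
  shows "\<bar>q * A\<^sup>2 + \<alpha> * A\<^sup>2 / G - \<alpha> * (A * d1 / P) - pa * d2\<bar> < \<epsilon>"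
proof -
  have tri: "\<bar>a + b - c - e\<bar> \<le> \<bar>a\<bar> + \<bar>b\<bar> + \<bar>c\<bar> + \<bar>e\<bar>" for a b c e :: real by arith
  have divle: "x / y \<le> x" if "x \<ge> 0" "y \<ge> 1" for x y :: real
  proof -
    have "x * 1 \<le> x * y" using that by (intro mult_left_mono) auto
    then show ?thesis using that by (simp add: divide_le_eq)
  qed
  have A2: "A\<^sup>2 \<le> p\<^sup>2 * \<delta>"
  proof -
    have "A\<^sup>2 = \<bar>A\<bar>\<^sup>2" by simp
    also have "\<dots> \<le> (p * \<delta>)\<^sup>2" by (rule power_mono[OF hA]) simp
    also have "\<dots> = p\<^sup>2 * \<delta> * \<delta>" by (simp add: power2_eq_square)
    also have "\<dots> \<le> p\<^sup>2 * \<delta> * 1" using d p by (intro mult_left_mono) auto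
    finally show ?thesis by simp
  qed
  have t1: "\<bar>q * A\<^sup>2\<bar> \<le> p\<^sup>2 * \<delta>"
  proof -
    have "\<bar>q * A\<^sup>2\<bar> = q * A\<^sup>2" using q by simp
    also have "\<dots> \<le> 1 * A\<^sup>2" using q by (intro mult_right_mono) auto
    finally show ?thesis using A2 by simp
  qed
  have t2: "\<bar>\<alpha> * A\<^sup>2 / G\<bar> \<le> \<alpha> * (p\<^sup>2 * \<delta>)"
  proof -
    have "\<bar>\<alpha> * A\<^sup>2 / G\<bar> = \<alpha> * A\<^sup>2 / G" using al G by simp
    also have "\<dots> \<le> \<alpha> * A\<^sup>2" using al G
      using divle[of "\<alpha> * A\<^sup>2" G] by simp
    also have "\<dots> \<le> \<alpha> * (p\<^sup>2 * \<delta>)" using A2 al by (intro mult_left_mono) auto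
    finally show ?thesis .
  qed
  have t3: "\<bar>\<alpha> * (A * d1 / P)\<bar> \<le> \<alpha> * p * \<delta>"
  proof -
    have "\<bar>A * d1 / P\<bar> = \<bar>A\<bar> * \<bar>d1\<bar> / P" using P by (simp add: abs_mult)
    also have "\<dots> \<le> \<bar>A\<bar> * \<bar>d1\<bar>" using P divle[of "\<bar>A\<bar> * \<bar>d1\<bar>" P] by simp
    also have "\<dots> \<le> (p * \<delta>) * 1" using hA h1 d by (intro mult_mono) auto
    finally have "\<bar>A * d1 / P\<bar> \<le> p * \<delta>" by simp
    then have "\<alpha> * \<bar>A * d1 / P\<bar> \<le> \<alpha> * (p * \<delta>)" using al by (intro mult_left_mono) auto
    then show ?thesis using al by (simp add: abs_mult mult.assoc)
  qed
  have t4: "\<bar>pa * d2\<bar> \<le> p * \<delta>"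
  proof -
    have "\<bar>pa * d2\<bar> = pa * \<bar>d2\<bar>" using pa by (simp add: abs_mult)
    also have "\<dots> \<le> pa * (\<delta> * \<bar>d1\<bar>)" using h2 pa by (intro mult_left_mono) auto
    also have "\<dots> = \<delta> * \<bar>A\<bar>" using Aeq pa by (simp add: abs_mult)
    also have "\<dots> \<le> 1 * (p * \<delta>)" using d hA by (intro mult_mono) auto
    finally show ?thesis by simp
  qed
  have "\<bar>q * A\<^sup>2 + \<alpha> * A\<^sup>2 / G - \<alpha> * (A * d1 / P) - pa * d2\<bar>
      \<le> \<bar>q * A\<^sup>2\<bar> + \<bar>\<alpha> * A\<^sup>2 / G\<bar> + \<bar>\<alpha> * (A * d1 / P)\<bar> + \<bar>pa * d2\<bar>"
    using tri[of "q * A\<^sup>2" "\<alpha> * A\<^sup>2 / G" "\<alpha> * (A * d1 / P)" "pa * d2"] .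
  also have "\<dots> \<le> p\<^sup>2 * \<delta> + \<alpha> * (p\<^sup>2 * \<delta>) + \<alpha> * p * \<delta> + p * \<delta>" using t1 t2 t3 t4 by linarith
  also have "\<dots> = \<delta> * ((1 + \<alpha>) * p\<^sup>2 + \<alpha> * p + p)" by (simp add: algebra_simps)
  finally show ?thesis using eps by linarith
qed
theorem lemma3p1:
  fixes \<alpha> \<rho> \<xi>0 :: real and u0 :: "real \<Rightarrow> real"
  assumes alpha_pos: "\<alpha> > 0"
    and rho_pos: "\<rho> > 0"
    and range01: "\<forall>x. 0 \<le> u0 x \<and> u0 x \<le> 1"
    and unif: "uniformly_continuous_on UNIV u0"
    and pos: "\<forall>x. u0 x > 0"
    and liminf: "Liminf at_bot (\<lambda>x. ereal (u0 x)) > 0"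
    and lim_top: "(u0 \<longlongrightarrow> 0) at_top"
    and xi0_pos: "\<xi>0 > 0"
    and C2: "\<exists>u1 u2. (\<forall>x \<ge> \<xi>0. (u0 has_real_derivative u1 x) (at x within {\<xi>0..})
                              \<and> (u1 has_real_derivative u2 x) (at x within {\<xi>0..}))
                   \<and> continuous_on {\<xi>0..} u2"
    and noninc: "\<forall>x y. \<xi>0 \<le> x \<longrightarrow> x \<le> y \<longrightarrow> u0 y \<le> u0 x"
    and phi1: "deriv (\<lambda>x. - ln (u0 x)) \<in> o[at_top](\<lambda>x. (- ln (u0 x)) powr (- \<alpha>))"
    and phi2: "deriv (deriv (\<lambda>x. - ln (u0 x))) \<in> o[at_top](deriv (\<lambda>x. - ln (u0 x)))"
  shows "\<forall>\<epsilon>>0. \<exists>tsh>0. \<forall>t\<ge>tsh. \<forall>x\<ge>x0fun \<alpha> \<rho> u0 t.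
           \<bar>deriv (deriv (\<lambda>y. wfun \<alpha> \<rho> u0 t y)) x\<bar>
             < \<epsilon> * wfun \<alpha> \<rho> u0 t x / (1 - ln (wfun \<alpha> \<rho> u0 t x)) powr \<alpha>"
proof (intro allI impI)
  fix \<epsilon> :: real assume eps: "\<epsilon> > 0"
  obtain u1 u2 where U12: "\<And>x. x \<ge> \<xi>0 \<Longrightarrow> (u0 has_real_derivative u1 x) (at x within {\<xi>0..})
       \<and> (u1 has_real_derivative u2 x) (at x within {\<xi>0..})"
    using C2 by blast
  define \<phi> where "\<phi> = (\<lambda>x. - ln (u0 x))"
  define d1 where "d1 = deriv \<phi>"
  define d2 where "d2 = deriv d1"
  have cont: "continuous_on UNIV u0" by (rule uniformly_continuous_imp_continuous[OF unif])
  have isc: "isCont u0 y" for y using cont by (simp add: continuous_on_eq_continuous_at)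
  have u0pos: "u0 y > 0" for y using pos by blast
  have phi_nn: "\<phi> y \<ge> 0" for y using range01 u0pos[of y] by (simp add: \<phi>_def)
  have at_eq: "at y within {\<xi>0..} = at y" if "y > \<xi>0" for y :: real
    using that by (intro at_within_interior) auto
  have du0: "(u0 has_real_derivative u1 y) (at y)" "(u1 has_real_derivative u2 y) (at y)" if "y > \<xi>0" for y
    using U12[of y] that at_eq[OF that] by auto
  define p1 where "p1 = (\<lambda>y. - (u1 y / u0 y))"
  have dphi: "(\<phi> has_real_derivative p1 y) (at y)" if "y > \<xi>0" for y
    unfolding \<phi>_def p1_def using du0(1)[OF that] u0pos[of y]
    by (auto intro!: derivative_eq_intros simp: field_simps)
  have D1: "(\<phi> has_real_derivative d1 y) (at y)" if "y > \<xi>0" for y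
    using dphi[OF that] unfolding d1_def by (simp add: DERIV_imp_deriv)
  have D2: "(d1 has_real_derivative d2 y) (at y)" if "y > \<xi>0" for y
  proof -
    have "(p1 has_real_derivative - ((u2 y * u0 y - u1 y * u1 y) / (u0 y * u0 y))) (at y)"
      unfolding p1_def using DERIV_divide[OF du0(2)[OF that] du0(1)[OF that]] u0pos[of y]
      by (intro DERIV_minus) auto
    then have "(d1 has_real_derivative - ((u2 y * u0 y - u1 y * u1 y) / (u0 y * u0 y))) (at y)"
      by (rule has_field_derivative_transform_within_open[of _ _ _ "{\<xi>0<..}"])
         (use that dphi in \<open>auto simp: d1_def DERIV_imp_deriv[symmetric]\<close>)
    then show ?thesis unfolding d2_def by (simp add: DERIV_imp_deriv)
  qed
  define p where "p = (2::real) powr \<alpha>"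
  have p0: "p > 0" by (simp add: p_def)
  define K0 where "K0 = (1 + \<alpha>) * p\<^sup>2 + \<alpha> * p + p"
  have K00: "K0 > 0" using p0 alpha_pos by (simp add: K0_def add_pos_pos)
  define \<delta> where "\<delta> = min 1 (\<epsilon> / (2 * K0))"
  have d0: "\<delta> > 0" "\<delta> \<le> 1" using eps K00 by (auto simp: \<delta>_def)
  have dK: "\<delta> * K0 < \<epsilon>"
  proof -
    have "\<delta> * K0 \<le> (\<epsilon> / (2 * K0)) * K0" using K00 by (intro mult_right_mono) (auto simp: \<delta>_def)
    also have "\<dots> = \<epsilon> / 2" using K00 by simp
    finally show ?thesis using eps by linarith
  qed
  have ev1: "eventually (\<lambda>y. \<phi> y \<ge> 1) at_top"
  proof -
    have "eventually (\<lambda>y. u0 y < exp (-1)) at_top" by (rule order_tendstoD(2)[OF lim_top]) simp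
    then show ?thesis
    proof (rule eventually_mono)
      fix y assume "u0 y < exp (-1)"
      then have "ln (u0 y) < ln (exp (-1))" using u0pos[of y] by (subst ln_less_cancel_iff) auto
      then show "\<phi> y \<ge> 1" by (simp add: \<phi>_def)
    qed
  qed
  have ev2: "eventually (\<lambda>y. norm (d1 y) \<le> \<delta> * norm (\<phi> y powr (-\<alpha>))) at_top"
    using landau_o.smallD[OF phi1 d0(1)] unfolding d1_def \<phi>_def .
  have ev3: "eventually (\<lambda>y. norm (d2 y) \<le> \<delta> * norm (d1 y)) at_top"
    using landau_o.smallD[OF phi2 d0(1)] unfolding d2_def d1_def \<phi>_def .
  have ev4: "eventually (\<lambda>y. y > \<xi>0) at_top" by (rule eventually_gt_at_top)
  obtain X where X: "\<And>y. y \<ge> X \<Longrightarrow> \<phi> y \<ge> 1 \<and> \<bar>d1 y\<bar> \<le> \<delta> * \<bar>\<phi> y powr (-\<alpha>)\<bar> \<and> \<bar>d2 y\<bar> \<le> \<delta> * \<bar>d1 y\<bar> \<and> y > \<xi>0"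
    using eventually_conj[OF ev1 eventually_conj[OF ev2 eventually_conj[OF ev3 ev4]]]
    unfolding eventually_at_top_linorder real_norm_def by blast
  obtain r where r0: "r > 0" and evr: "eventually (\<lambda>x. r < u0 x) at_bot"
  proof -
    obtain z :: ereal where z: "0 < z" "z < Liminf at_bot (\<lambda>x. ereal (u0 x))" using dense[OF liminf] by blast
    then obtain r where zr: "z = ereal r" by (cases z) auto
    show ?thesis
      by (rule that[of r]) (use z zr less_LiminfD[OF z(2)] in auto)
  qed
  obtain N where N: "\<And>y. y \<le> N \<Longrightarrow> r < u0 y" using evr unfolding eventually_at_bot_linorder by blast
  define M where "M = min N X"
  obtain xm where xm: "xm \<in> {M..X}" "\<And>y. y \<in> {M..X} \<Longrightarrow> u0 xm \<le> u0 y"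
    using continuous_attains_inf[of "{M..X}" u0] continuous_on_subset[OF cont] by (auto simp: M_def)
  define m where "m = min r (u0 xm)"
  have m0: "m > 0" using r0 u0pos[of xm] by (simp add: m_def)
  have mle: "u0 y \<ge> m" if "y \<le> X" for y
  proof (cases "y \<le> M")
    case True then show ?thesis using N[of y] by (simp add: M_def m_def)
  next
    case False then show ?thesis using xm(2)[of y] that by (simp add: m_def)
  qed
  define a where "a = \<alpha> + 1"
  have a0: "a > 0" using alpha_pos by (simp add: a_def)
  define c where "c = \<rho> * a"
  have c0: "c > 0" using a0 rho_pos by (simp add: c_def)
  define K where "K = 2 + \<bar>ln m\<bar>"
  have K0: "K > 0" by (simp add: K_def add_pos_nonneg)
  define tsh where "tsh = K powr a / c"
  have tsh0: "tsh > 0" using K0 c0 by (simp add: tsh_def)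
  show "\<exists>tsh>0. \<forall>t\<ge>tsh. \<forall>x\<ge>x0fun \<alpha> \<rho> u0 t.
           \<bar>deriv (deriv (\<lambda>y. wfun \<alpha> \<rho> u0 t y)) x\<bar>
             < \<epsilon> * wfun \<alpha> \<rho> u0 t x / (1 - ln (wfun \<alpha> \<rho> u0 t x)) powr \<alpha>"
  proof (intro exI[of _ tsh] conjI tsh0 allI impI)
    fix t x assume t: "t \<ge> tsh" and x: "x \<ge> x0fun \<alpha> \<rho> u0 t"
    define R where "R = (\<rho> * (\<alpha> + 1) * t + 1) powr (1 / (\<alpha> + 1))"
    define L where "L = exp (1 - R)"
    have L0: "L > 0" by (simp add: L_def)
    have ct: "c * t \<ge> K powr a" using t c0 by (simp add: tsh_def divide_le_eq mult.commute)
    have R_gt: "R > K"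
    proof -
      have "K powr a < \<rho> * (\<alpha> + 1) * t + 1" using ct by (simp add: c_def a_def)
      then have "(K powr a) powr (1/a) < (\<rho> * (\<alpha> + 1) * t + 1) powr (1/a)"
        using a0 by (intro powr_less_mono2) auto
      moreover have "(K powr a) powr (1/a) = K" using a0 K0 by (simp add: powr_powr)
      ultimately show ?thesis by (simp add: R_def a_def)
    qed
    have Lm: "L < m"
    proof -
      have "1 - R < ln m" using R_gt by (simp add: K_def)
      then have "exp (1 - R) < exp (ln m)" by simp
      then show ?thesis using m0 by (simp add: L_def)
    qed
    obtain N2 where N2: "\<And>y. y \<ge> N2 \<Longrightarrow> u0 y < L"
      using order_tendstoD(2)[OF lim_top L0] unfolding eventually_at_top_linorder by blast
    define b where "b = max N2 X"
    obtain y0 where y0: "X \<le> y0" "y0 \<le> b" "u0 y0 = L"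
      using IVT2[of u0 b L X] N2[of b] mle[of X] Lm isc by (force simp: b_def)
    define S where "S = {x. u0 x = L}"
    have x0eq: "x0fun \<alpha> \<rho> u0 t = Sup S" by (simp add: x0fun_def S_def L_def R_def)
    have bdd: "bdd_above S"
    proof (rule bdd_aboveI)
      fix y assume "y \<in> S" then show "y \<le> N2" using N2[of y] by (force simp: S_def)
    qed
    have "y0 \<le> Sup S" using y0 by (intro cSup_upper bdd) (auto simp: S_def)
    then have xy0: "y0 \<le> x" using x x0eq by simp
    have Xx: "X \<le> x" using xy0 y0 by simp
    have ux: "u0 x \<le> L" using noninc X[of y0] y0 xy0 by force
    have Xfacts: "\<phi> x \<ge> 1" "\<bar>d1 x\<bar> \<le> \<delta> * \<bar>\<phi> x powr (-\<alpha>)\<bar>" "\<bar>d2 x\<bar> \<le> \<delta> * \<bar>d1 x\<bar>" "x > \<xi>0"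
      using X[OF Xx] by auto
    have R0: "R > 0" using R_gt K0 by simp
    have "ln (u0 x) \<le> ln L" using ux u0pos[of x] L0 by simp
    then have PR: "1 + \<phi> x \<ge> R" by (simp add: \<phi>_def L_def)
    have G1: "(1 + \<phi> x) powr a - \<rho> * (\<alpha> + 1) * t \<ge> 1"
    proof -
      have "R powr a \<le> (1 + \<phi> x) powr a" using PR R0 a0 by (intro powr_mono2) auto
      moreover have "R powr a = \<rho> * (\<alpha> + 1) * t + 1"
      proof -
        have "\<rho> * (\<alpha> + 1) * t \<ge> 0" using rho_pos alpha_pos t tsh0 by simp
        then show ?thesis using a0 unfolding R_def by (simp add: powr_powr a_def)
      qed
      ultimately show ?thesis by simp
    qed
    define Gf where "Gf = (\<lambda>y. (1 + \<phi> y) powr (\<alpha> + 1) - \<rho> * (\<alpha> + 1) * t)"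
    define U where "U = {y. \<xi>0 < y} \<inter> {y. 0 < Gf y}"
    have contG: "continuous_on UNIV Gf"
    proof -
      have n0: "u0 y \<noteq> 0" for y using u0pos[of y] by simp
      have n1: "ln (u0 y) \<noteq> 1" for y using range01 u0pos[of y] by (metis ln_le_zero_iff not_one_le_zero)
      show ?thesis unfolding Gf_def \<phi>_def using cont n0 n1
        by (intro continuous_intros) auto
    qed
    have oU: "open U" unfolding U_def
      by (intro open_Int open_Collect_less contG continuous_intros)
    have xU: "x \<in> U" using Xfacts G1 by (simp add: U_def Gf_def a_def)
    have weq: "(\<lambda>y. wfun \<alpha> \<rho> u0 t y) = (\<lambda>y. exp (1 - ((1 + \<phi> y) powr (\<alpha> + 1) - \<rho> * (\<alpha> + 1) * t) powr (1 / (\<alpha> + 1))))"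
      by (simp add: wfun_def \<phi>_def)
    define P where "P = 1 + \<phi> x"
    define G where "G = P powr (\<alpha> + 1) - \<rho> * (\<alpha> + 1) * t"
    define q where "q = G powr (1 / (\<alpha> + 1) - 1)"
    define A where "A = P powr \<alpha> * d1 x"
    define w where "w = exp (1 - G powr (1 / (\<alpha> + 1)))"
    define E where "E = q * A\<^sup>2 + \<alpha> * A\<^sup>2 / G - \<alpha> * (A * d1 x / P) - P powr \<alpha> * d2 x"
    have dd: "deriv (deriv (\<lambda>y. wfun \<alpha> \<rho> u0 t y)) x = w * q * E"
      unfolding weq E_def w_def q_def A_def G_def P_def
      by (rule second_deriv[OF oU xU alpha_pos])
         (use D1 D2 phi_nn in \<open>auto simp: U_def Gf_def add_pos_nonneg\<close>)
    have G1': "G \<ge> 1" using G1 by (simp add: G_def P_def a_def)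
    have P1: "P \<ge> 1" using phi_nn[of x] by (simp add: P_def)
    have q0: "q > 0" using G1' by (simp add: q_def)
    have q1: "q \<le> 1"
    proof -
      have "G powr (1 / (\<alpha> + 1) - 1) \<le> 1 powr (1 / (\<alpha> + 1) - 1)"
        using G1' alpha_pos by (intro powr_mono2') (auto simp: field_simps)
      then show ?thesis by (simp add: q_def)
    qed
    have w0: "w > 0" by (simp add: w_def)
    have ph1: "\<phi> x \<ge> 1" using Xfacts by simp
    have phm: "\<phi> x powr (-\<alpha>) \<le> 1"
      using powr_mono2'[of "-\<alpha>" 1 "\<phi> x"] ph1 alpha_pos by simp
    have phm0: "\<phi> x powr (-\<alpha>) > 0" using ph1 by simp
    have hd1: "\<bar>d1 x\<bar> \<le> \<delta>"
    proof -
      have "\<bar>d1 x\<bar> \<le> \<delta> * \<phi> x powr (-\<alpha>)" using Xfacts phm0 by simp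
      also have "\<dots> \<le> \<delta> * 1" using phm d0 by (intro mult_left_mono) auto
      finally show ?thesis by simp
    qed
    have hA: "\<bar>A\<bar> \<le> p * \<delta>"
    proof -
      have Pp: "P powr \<alpha> \<le> p * \<phi> x powr \<alpha>"
      proof -
        have "P powr \<alpha> \<le> (2 * \<phi> x) powr \<alpha>" using ph1 alpha_pos P1 by (intro powr_mono2) (auto simp: P_def)
        also have "\<dots> = p * \<phi> x powr \<alpha>" using ph1 by (simp add: p_def powr_mult)
        finally show ?thesis .
      qed
      have "\<bar>A\<bar> = P powr \<alpha> * \<bar>d1 x\<bar>" by (simp add: A_def abs_mult)
      also have "\<dots> \<le> (p * \<phi> x powr \<alpha>) * (\<delta> * \<phi> x powr (-\<alpha>))"
        using Pp Xfacts phm0 p0 by (intro mult_mono) auto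
      also have "\<dots> = p * \<delta> * (\<phi> x powr \<alpha> * \<phi> x powr (-\<alpha>))" by (simp add: algebra_simps)
      also have "\<phi> x powr \<alpha> * \<phi> x powr (-\<alpha>) = 1" using ph1 by (simp add: powr_add[symmetric])
      finally show ?thesis by simp
    qed
    have Eb: "\<bar>E\<bar> < \<epsilon>" unfolding E_def
      by (rule bound_E[OF q0 q1 G1' P1 alpha_pos hA hd1]) 
         (use Xfacts d0 p0 P1 dK in \<open>auto simp: A_def K0_def\<close>)
    have wf: "wfun \<alpha> \<rho> u0 t x = w" by (simp add: wfun_def w_def G_def P_def \<phi>_def)
    have lnw: "(1 - ln w) powr \<alpha> = 1 / q"
    proof -
      have "(1 - ln w) powr \<alpha> = G powr (\<alpha> / (\<alpha> + 1))" using G1' by (simp add: w_def powr_powr)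
      moreover have "G powr (\<alpha> / (\<alpha> + 1)) * q = 1"
      proof -
        have "\<alpha> / (\<alpha> + 1) + (1 / (\<alpha> + 1) - 1) = 0" using alpha_pos by (simp add: field_simps)
        then show ?thesis using G1' by (simp add: q_def powr_add[symmetric])
      qed
      ultimately show ?thesis using q0 by (simp add: field_simps)
    qed
    have "\<bar>w * q * E\<bar> = w * q * \<bar>E\<bar>" using w0 q0 by (simp add: abs_mult)
    also have "\<dots> < w * q * \<epsilon>" using w0 q0 Eb by simp
    finally show "\<bar>deriv (deriv (\<lambda>y. wfun \<alpha> \<rho> u0 t y)) x\<bar>
             < \<epsilon> * wfun \<alpha> \<rho> u0 t x / (1 - ln (wfun \<alpha> \<rho> u0 t x)) powr \<alpha>"
      unfolding dd wf lnw by (simp add: field_simps)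
  qed
qed
end
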